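(* Let $(X_i)_{i\in\mathbb N}$ be independent real random variables with $\mathbb E[X_i]=0$ for all $i$ and $\sup_{i\in\mathbb N}\mathbb E\big[\exp\{K(\log^+|X_i|)^\gamma\}\big]<\infty$ for some $K>0$ and $\gamma>1$, where $\log^+x=\max(\log x,0)$. Then for every $\varepsilon>0$ there is $c>0$ such that $$\mathbb P\Big(\exists\, k\ge n:\ \Big|\sum_{i=1}^kX_i\Big|>\varepsilon k\Big)\le c^{-1}e^{-c\log^\gamma n}\qquad\forall n\in\mathbb N.$$ *)

theory Defs
  imports "HOL-Probability.Probability"
begin

definition log_plus :: "real \<Rightarrow> real" where
  "log_plus x = max (ln x) 0"

end

theory Submission
  imports Defs "HOL-Real_Asymp.Real_Asymp"
begin

theorem lemmaE1:
  fixes M :: "'a measure" and X :: "nat \<Rightarrow> 'a \<Rightarrow> real" and K \<gamma> :: real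
  assumes "prob_space M"
    and "prob_space.indep_vars M (\<lambda>_. borel) X UNIV"
    and "\<And>i. integrable M (X i)"
    and "\<And>i. prob_space.expectation M (X i) = 0"
    and "K > 0" and "\<gamma> > 1"
    and "(SUP i. \<integral>\<^sup>+ \<omega>. ennreal (exp (K * (log_plus \<bar>X i \<omega>\<bar>) powr \<gamma>)) \<partial>M) < \<infinity>"
  shows "\<forall>\<epsilon>>0. \<exists>c>0. \<forall>n::nat.
           measure M {\<omega> \<in> space M. \<exists>k\<ge>n. \<bar>\<Sum>i\<in>{1..k}. X i \<omega>\<bar> > \<epsilon> * real k}
             \<le> (1 / c) * exp (- c * (ln (real n)) powr \<gamma>)"
proof (intro allI impI)
  fix \<epsilon> :: real assume \<epsilon>: "\<epsilon> > 0"
  interpret P: prob_space M by fact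
  have rv[measurable]: "\<And>i. X i \<in> borel_measurable M"
    using assms(2) unfolding P.indep_vars_def by auto
  define \<phi> where "\<phi> = (\<lambda>x::real. exp (K * log_plus \<bar>x\<bar> powr \<gamma>))"
  have phi_meas[measurable]: "\<phi> \<in> borel_measurable borel"
    unfolding \<phi>_def log_plus_def by measurable
  have phi_pos: "\<And>x. \<phi> x > 0" unfolding \<phi>_def by simp
  have phi_abs: "\<And>x. \<phi> \<bar>x\<bar> = \<phi> x" unfolding \<phi>_def by simp
  have phi_mono: "\<phi> x \<le> \<phi> y" if "\<bar>x\<bar> \<le> \<bar>y\<bar>" for x y
  proof -
    have "log_plus \<bar>x\<bar> \<le> log_plus \<bar>y\<bar>"
      unfolding log_plus_def using that by (cases "x = 0") (auto intro!: max.coboundedI1 ln_mono)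
    moreover have "0 \<le> log_plus \<bar>x\<bar>" unfolding log_plus_def by simp
    ultimately have "log_plus \<bar>x\<bar> powr \<gamma> \<le> log_plus \<bar>y\<bar> powr \<gamma>"
      using assms(6) by (intro powr_mono2) auto
    thus ?thesis unfolding \<phi>_def using assms(5) by simp
  qed
  define S where "S = (SUP i. \<integral>\<^sup>+ \<omega>. ennreal (\<phi> (X i \<omega>)) \<partial>M)"
  have "S < \<infinity>" using assms(7) unfolding S_def \<phi>_def .
  then obtain B0 where B0: "S = ennreal B0" "B0 \<ge> 0"
    using less_top_ennreal by (metis infinity_ennreal_def)
  define B where "B = B0 + 1"
  have Bpos: "B > 0" using B0 by (simp add: B_def)
  have nnB: "(\<integral>\<^sup>+ \<omega>. ennreal (\<phi> (X i \<omega>)) \<partial>M) \<le> ennreal B" for i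
  proof -
    have "(\<integral>\<^sup>+ \<omega>. ennreal (\<phi> (X i \<omega>)) \<partial>M) \<le> S" unfolding S_def by (rule SUP_upper) auto
    also have "\<dots> \<le> ennreal B" using B0 by (simp add: B_def)
    finally show ?thesis .
  qed
  have phi_int: "integrable M (\<lambda>\<omega>. \<phi> (X i \<omega>))" for i
    using nnB[of i] phi_pos by (intro integrableI_nonneg) (auto intro: less_imp_le le_less_trans[OF _ ennreal_less_top[of B]])
  have phi_E: "P.expectation (\<lambda>\<omega>. \<phi> (X i \<omega>)) \<le> B" for i
  proof -
    have "P.expectation (\<lambda>\<omega>. \<phi> (X i \<omega>)) = enn2real (\<integral>\<^sup>+ \<omega>. ennreal (\<phi> (X i \<omega>)) \<partial>M)"
      using phi_pos by (intro integral_eq_nn_integral) (auto intro: less_imp_le)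
    also have "\<dots> \<le> enn2real (ennreal B)" by (intro enn2real_mono nnB) auto
    finally show ?thesis using Bpos by simp
  qed
  have markov: "P.prob {\<omega>\<in>space M. T < \<bar>X i \<omega>\<bar>} \<le> B / \<phi> T" if T0: "T \<ge> 0" for i T
  proof -
    have "P.prob {\<omega>\<in>space M. T < \<bar>X i \<omega>\<bar>} \<le> P.prob {\<omega>\<in>space M. \<phi> T \<le> \<phi> (X i \<omega>)}"
      using T0 by (intro P.finite_measure_mono) (auto intro!: phi_mono)
    also have "\<dots> \<le> P.expectation (\<lambda>\<omega>. \<phi> (X i \<omega>)) / \<phi> T"
      by (intro integral_Markov_inequality_measure[where A = "space M"] phi_int phi_pos)
         (auto intro: less_imp_le phi_pos)
    also have "\<dots> \<le> B / \<phi> T" using phi_E[of i] phi_pos[of T] by (simp add: divide_right_mono)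
    finally show ?thesis .
  qed
  have "eventually (\<lambda>y::real. 2 * ln y \<le> K * ln y powr \<gamma>) at_top"
    using assms(5,6) by real_asymp
  then obtain N1 where N1: "\<And>y. y \<ge> N1 \<Longrightarrow> 2 * ln y \<le> K * ln y powr \<gamma>"
    by (auto simp: eventually_at_top_linorder)
  define T1 where "T1 = max N1 1"
  have T1: "T1 \<ge> 1" unfolding T1_def by simp
  have sq_phi: "y * y \<le> \<phi> y" if "y \<ge> T1" for y
  proof -
    have y1: "y \<ge> 1" "y \<ge> N1" using that unfolding T1_def by auto
    have "y * y = exp (2 * ln y)" using y1 by (simp only: mult_2 exp_add) simp
    also have "\<dots> \<le> exp (K * ln y powr \<gamma>)" using N1[OF y1(2)] by simp
    also have "\<dots> = \<phi> y" unfolding \<phi>_def log_plus_def using y1 by simp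
    finally show ?thesis .
  qed
  have tailE: "\<bar>P.expectation (\<lambda>\<omega>. if \<bar>X i \<omega>\<bar> \<le> T then X i \<omega> else 0)\<bar> \<le> B / T"
    if T: "T \<ge> T1" for i T
  proof -
    have Tpos: "T > 0" using T T1 by simp
    define Z where "Z = (\<lambda>\<omega>. if T < \<bar>X i \<omega>\<bar> then X i \<omega> else 0)"
    have Zm[measurable]: "Z \<in> borel_measurable M" unfolding Z_def by measurable
    have Zint: "integrable M Z"
      by (rule Bochner_Integration.integrable_bound[OF assms(3)[of i] Zm]) (auto simp: Z_def)
    have Zb: "\<bar>Z \<omega>\<bar> \<le> \<phi> (X i \<omega>) / T" for \<omega>
    proof (cases "T < \<bar>X i \<omega>\<bar>")
      case True
      have "\<bar>X i \<omega>\<bar> * T \<le> \<bar>X i \<omega>\<bar> * \<bar>X i \<omega>\<bar>" using True Tpos by (intro mult_left_mono) auto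
      also have "\<dots> \<le> \<phi> (X i \<omega>)" using sq_phi[of "\<bar>X i \<omega>\<bar>"] True T phi_abs by simp
      finally show ?thesis using True Tpos by (simp add: Z_def field_simps)
    next
      case False thus ?thesis using phi_pos[of "X i \<omega>"] Tpos by (simp add: Z_def)
    qed
    have eq: "(\<lambda>\<omega>. if \<bar>X i \<omega>\<bar> \<le> T then X i \<omega> else 0) = (\<lambda>\<omega>. X i \<omega> - Z \<omega>)"
      by (auto simp: Z_def)
    have "P.expectation (\<lambda>\<omega>. X i \<omega> - Z \<omega>) = - P.expectation Z"
      using assms(3,4) Zint by simp
    hence "\<bar>P.expectation (\<lambda>\<omega>. if \<bar>X i \<omega>\<bar> \<le> T then X i \<omega> else 0)\<bar> = \<bar>P.expectation Z\<bar>"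
      by (simp add: eq)
    also have "\<dots> \<le> P.expectation (\<lambda>\<omega>. \<bar>Z \<omega>\<bar>)" by (rule integral_abs_bound)
    also have "\<dots> \<le> P.expectation (\<lambda>\<omega>. \<phi> (X i \<omega>) / T)"
      by (intro integral_mono Zb) (auto intro: Zint phi_int)
    also have "\<dots> = P.expectation (\<lambda>\<omega>. \<phi> (X i \<omega>)) / T" by simp
    also have "\<dots> \<le> B / T" using phi_E[of i] Tpos by (simp add: divide_right_mono)
    finally show ?thesis .
  qed
  have perk: "P.prob {\<omega>\<in>space M. \<epsilon> * real k < \<bar>\<Sum>i\<in>{1..k}. X i \<omega>\<bar>}
      \<le> real k * B / \<phi> T + 2 * exp (- (\<epsilon>\<^sup>2 * real k) / (8 * T\<^sup>2))"
    if k: "k \<ge> 1" and T: "T \<ge> T1" "T \<ge> 2 * B / \<epsilon>" for k :: nat and T :: real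
  proof -
    have Tpos: "T > 0" using T T1 by simp
    define Y where "Y = (\<lambda>i \<omega>. (\<lambda>x. if \<bar>x\<bar> \<le> T then x else 0) (X i \<omega>))"
    have Yeq: "Y i = (\<lambda>\<omega>. if \<bar>X i \<omega>\<bar> \<le> T then X i \<omega> else 0)" for i by (simp add: Y_def)
    have Ym[measurable]: "Y i \<in> borel_measurable M" for i unfolding Yeq by measurable
    define \<mu> where "\<mu> = (\<Sum>i\<in>{1..k}. P.expectation (Y i))"
    have indY: "P.indep_vars (\<lambda>_. borel) Y {1..k}"
      unfolding Y_def
      by (rule P.indep_vars_compose2[OF P.indep_vars_subset[OF assms(2)]]) auto
    interpret H: Hoeffding_ineq M "{1..k}" Y "\<lambda>_. -T" "\<lambda>_. T" \<mu>
    proof unfold_locales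
      fix i assume "i \<in> {1..k}"
      show "AE x in M. Y i x \<in> {-T..T}" using Tpos by (intro AE_I2) (auto simp: Yeq abs_le_iff)
    qed (insert indY, simp_all add: \<mu>_def)
    have sumpos: "(\<Sum>i\<in>{1..k}. (T - (-T))\<^sup>2) > 0" using k Tpos by simp
    have hoef: "P.prob {\<omega>\<in>space M. \<bar>(\<Sum>i\<in>{1..k}. Y i \<omega>) - \<mu>\<bar> \<ge> \<epsilon> * real k / 2}
       \<le> 2 * exp (- (\<epsilon>\<^sup>2 * real k) / (8 * T\<^sup>2))"
    proof -
      have "P.prob {\<omega>\<in>space M. \<bar>(\<Sum>i\<in>{1..k}. Y i \<omega>) - \<mu>\<bar> \<ge> \<epsilon> * real k / 2}
         \<le> 2 * exp (-2 * (\<epsilon> * real k / 2)\<^sup>2 / (\<Sum>i\<in>{1..k}. (T - (-T))\<^sup>2))"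
        by (rule H.Hoeffding_ineq_abs_ge) (use \<epsilon> sumpos in auto)
      also have "-2 * (\<epsilon> * real k / 2)\<^sup>2 / (\<Sum>i\<in>{1..k}. (T - (-T))\<^sup>2) = - (\<epsilon>\<^sup>2 * real k) / (8 * T\<^sup>2)"
      proof -
        have "(\<Sum>i\<in>{1..k}. (T - (-T))\<^sup>2) = real k * (4 * T\<^sup>2)" by (simp add: power2_eq_square)
        moreover have "-2 * (\<epsilon> * real k / 2)\<^sup>2 / (real k * (4 * T\<^sup>2)) = - (\<epsilon>\<^sup>2 * real k) / (8 * T\<^sup>2)"
          using k Tpos by (simp add: power2_eq_square)
        ultimately show ?thesis by simp
      qed
      finally show ?thesis .
    qed
    have mu: "\<bar>\<mu>\<bar> \<le> \<epsilon> * real k / 2"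
    proof -
      have "\<bar>\<mu>\<bar> \<le> (\<Sum>i\<in>{1..k}. \<bar>P.expectation (Y i)\<bar>)" unfolding \<mu>_def by (rule sum_abs)
      also have "\<dots> \<le> (\<Sum>i\<in>{1..k}. B / T)" by (intro sum_mono) (simp add: Yeq tailE[OF T(1)])
      also have "\<dots> = real k * (B / T)" by simp
      also have "\<dots> \<le> real k * (\<epsilon> / 2)"
      proof (intro mult_left_mono)
        have "2 * B \<le> T * \<epsilon>" using T(2) \<epsilon> by (simp add: pos_divide_le_eq)
        thus "B / T \<le> \<epsilon> / 2" using Tpos by (simp add: pos_divide_le_eq mult_ac)
      qed simp
      finally show ?thesis by (simp add: mult_ac)
    qed
    define U1 where "U1 = (\<Union>i\<in>{1..k}. {\<omega>\<in>space M. T < \<bar>X i \<omega>\<bar>})"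
    define U2 where "U2 = {\<omega>\<in>space M. \<epsilon> * real k / 2 \<le> \<bar>(\<Sum>i\<in>{1..k}. Y i \<omega>) - \<mu>\<bar>}"
    have U1m: "U1 \<in> sets M" unfolding U1_def by measurable
    have U2m: "U2 \<in> sets M" unfolding U2_def by measurable
    have sub: "{\<omega>\<in>space M. \<epsilon> * real k < \<bar>\<Sum>i\<in>{1..k}. X i \<omega>\<bar>} \<subseteq> U1 \<union> U2"
    proof
      fix \<omega> assume w: "\<omega> \<in> {\<omega>\<in>space M. \<epsilon> * real k < \<bar>\<Sum>i\<in>{1..k}. X i \<omega>\<bar>}"
      show "\<omega> \<in> U1 \<union> U2"
      proof (cases "\<omega> \<in> U1")
        case False
        hence "\<forall>i\<in>{1..k}. Y i \<omega> = X i \<omega>" using w by (auto simp: U1_def Yeq)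
        hence "(\<Sum>i\<in>{1..k}. Y i \<omega>) = (\<Sum>i\<in>{1..k}. X i \<omega>)" by (intro sum.cong) auto
        moreover have "\<epsilon> * real k < \<bar>\<Sum>i\<in>{1..k}. X i \<omega>\<bar>" "\<omega> \<in> space M" using w by auto
        ultimately have "\<epsilon> * real k / 2 \<le> \<bar>(\<Sum>i\<in>{1..k}. Y i \<omega>) - \<mu>\<bar>" "\<omega> \<in> space M" using mu by arith+
        hence "\<omega> \<in> U2" unfolding U2_def by blast
        thus ?thesis by simp
      qed simp
    qed
    have "P.prob {\<omega>\<in>space M. \<epsilon> * real k < \<bar>\<Sum>i\<in>{1..k}. X i \<omega>\<bar>} \<le> P.prob (U1 \<union> U2)"
      using U1m U2m by (intro P.finite_measure_mono sub) auto
    also have "\<dots> \<le> P.prob U1 + P.prob U2" using U1m U2m by (rule measure_Un_le)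
    also have "P.prob U1 \<le> (\<Sum>i\<in>{1..k}. P.prob {\<omega>\<in>space M. T < \<bar>X i \<omega>\<bar>})"
      unfolding U1_def by (intro P.finite_measure_subadditive_finite) auto
    also have "\<dots> \<le> (\<Sum>i\<in>{1..k}. B / \<phi> T)" using Tpos by (intro sum_mono markov) auto
    also have "\<dots> = real k * B / \<phi> T" by simp
    also have "P.prob U2 \<le> 2 * exp (- (\<epsilon>\<^sup>2 * real k) / (8 * T\<^sup>2))" using hoef unfolding U2_def .
    finally show ?thesis by simp
  qed
  define c0 where "c0 = K / (2 * 4 powr \<gamma>)"
  have c0: "c0 > 0" using assms(5) by (simp add: c0_def)
  have e8: "\<epsilon>\<^sup>2 / 8 > 0" using \<epsilon> by simp
  have ev: "eventually (\<lambda>k::nat. real k \<ge> 1 \<and> sqrt (sqrt (real k)) \<ge> T1 \<and> sqrt (sqrt (real k)) \<ge> 2 * B / \<epsilon>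
       \<and> ln 2 + ln B + 3 * ln (real k) \<le> c0 * ln (real k) powr \<gamma>
       \<and> ln 4 + 2 * ln (real k) + c0 * ln (real k) powr \<gamma> \<le> \<epsilon>\<^sup>2 / 8 * sqrt (real k)) sequentially"
    using c0 e8 assms(6) by (intro eventually_conj; real_asymp)
  then obtain N where N: "\<And>k. k \<ge> N \<Longrightarrow> real k \<ge> 1 \<and> sqrt (sqrt (real k)) \<ge> T1 \<and> sqrt (sqrt (real k)) \<ge> 2 * B / \<epsilon>
       \<and> ln 2 + ln B + 3 * ln (real k) \<le> c0 * ln (real k) powr \<gamma>
       \<and> ln 4 + 2 * ln (real k) + c0 * ln (real k) powr \<gamma> \<le> \<epsilon>\<^sup>2 / 8 * sqrt (real k)"
    by (auto simp: eventually_sequentially)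
  have N1: "N \<ge> 1" using N[of N] by (cases N) auto
  have bound_k: "P.prob {\<omega>\<in>space M. \<epsilon> * real k < \<bar>\<Sum>i\<in>{1..k}. X i \<omega>\<bar>}
      \<le> exp (- c0 * ln (real k) powr \<gamma>) * inverse (real k ^ 2)" if kN: "k \<ge> N" for k
  proof -
    note Nk = N[OF kN]
    define T where "T = sqrt (sqrt (real k))"
    define L where "L = ln (real k) powr \<gamma>"
    define E where "E = exp (c0 * L)"
    define F where "F = exp (\<epsilon>\<^sup>2 / 8 * sqrt (real k))"
    have k1: "real k \<ge> 1" and kpos: "real k > 0" using Nk by auto
    have lnk: "ln (real k) \<ge> 0" using k1 by simp
    have Epos: "E > 0" and Fpos: "F > 0" by (auto simp: E_def F_def)
    have pk: "P.prob {\<omega>\<in>space M. \<epsilon> * real k < \<bar>\<Sum>i\<in>{1..k}. X i \<omega>\<bar>}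
      \<le> real k * B / \<phi> T + 2 * exp (- (\<epsilon>\<^sup>2 * real k) / (8 * T\<^sup>2))"
      using Nk by (intro perk) (auto simp: T_def)
    have T2: "T\<^sup>2 = sqrt (real k)" unfolding T_def by simp
    have lnT: "ln T = ln (real k) / 4" unfolding T_def using kpos by (simp add: ln_sqrt)
    have T1': "T \<ge> 1" using k1 by (simp add: T_def)
    have "\<phi> T = exp (K * (ln (real k) / 4) powr \<gamma>)"
      unfolding \<phi>_def log_plus_def using T1' lnk by (simp add: lnT)
    also have "(ln (real k) / 4) powr \<gamma> = L / 4 powr \<gamma>" unfolding L_def using lnk by (simp add: powr_divide)
    also have "K * (L / 4 powr \<gamma>) = c0 * L + c0 * L" unfolding c0_def by (simp add: field_simps)
    finally have phiT: "\<phi> T = E * E" unfolding E_def by (simp only: exp_add)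
    have "exp (- (\<epsilon>\<^sup>2 * real k) / (8 * T\<^sup>2)) = inverse F"
    proof -
      have "(\<epsilon>\<^sup>2 * real k) / (8 * T\<^sup>2) = \<epsilon>\<^sup>2 / 8 * sqrt (real k)"
        using kpos unfolding T2 by (simp add: field_simps)
      thus ?thesis unfolding F_def by (simp add: exp_minus)
    qed
    note pk = pk[unfolded phiT this]
    have c4: "2 * B * real k ^ 3 \<le> E"
    proof -
      have "ln (2 * B * real k ^ 3) = ln 2 + ln B + 3 * ln (real k)"
        using Bpos kpos by (simp add: ln_mult ln_realpow)
      hence "ln (2 * B * real k ^ 3) \<le> c0 * L" using Nk unfolding L_def by simp
      hence "exp (ln (2 * B * real k ^ 3)) \<le> E" unfolding E_def by simp
      thus ?thesis using Bpos kpos by simp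
    qed
    have c5: "4 * real k ^ 2 * E \<le> F"
    proof -
      have "ln (4 * real k ^ 2 * E) = ln 4 + 2 * ln (real k) + c0 * L"
        using Epos kpos by (simp add: ln_mult ln_realpow E_def)
      hence "ln (4 * real k ^ 2 * E) \<le> \<epsilon>\<^sup>2 / 8 * sqrt (real k)" using Nk unfolding L_def by simp
      hence "exp (ln (4 * real k ^ 2 * E)) \<le> F" unfolding F_def by simp
      thus ?thesis using Epos kpos by simp
    qed
    have t1: "real k * B / (E * E) \<le> inverse (2 * E * real k ^ 2)"
    proof -
      have "real k * B * (2 * E * real k ^ 2) = (2 * B * real k ^ 3) * E" by (simp add: power2_eq_square power3_eq_cube)
      also have "\<dots> \<le> E * E" using c4 Epos by (intro mult_right_mono) auto
      finally show ?thesis using Epos kpos by (simp add: field_simps)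
    qed
    have t2: "2 * inverse F \<le> inverse (2 * E * real k ^ 2)"
      using c5 Epos Fpos kpos by (simp add: field_simps)
    have "exp (- c0 * ln (real k) powr \<gamma>) * inverse (real k ^ 2) = inverse E * inverse (real k ^ 2)"
      unfolding E_def L_def by (simp add: exp_minus)
    also have "\<dots> = inverse (2 * E * real k ^ 2) + inverse (2 * E * real k ^ 2)"
      using Epos kpos by (simp add: field_simps)
    finally show ?thesis using pk t1 t2 by linarith
  qed
  define Z where "Z = (\<Sum>i. inverse (real (Suc i) ^ 2))"
  have Zs: "summable (\<lambda>i. inverse (real (Suc i) ^ 2))"
  proof -
    have "summable (\<lambda>n. inverse (real n ^ 2))" by (rule inverse_power_summable) simp
    thus ?thesis by (subst summable_Suc_iff)
  qed
  have Z0: "Z \<ge> 0" unfolding Z_def by (intro suminf_nonneg Zs) auto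
  have big: "P.prob {\<omega> \<in> space M. \<exists>k\<ge>n. \<bar>\<Sum>i\<in>{1..k}. X i \<omega>\<bar> > \<epsilon> * real k}
     \<le> exp (- c0 * ln (real n) powr \<gamma>) * Z" if n: "n \<ge> N" for n
  proof -
    define A where "A = (\<lambda>k. {\<omega>\<in>space M. \<epsilon> * real k < \<bar>\<Sum>i\<in>{1..k}. X i \<omega>\<bar>})"
    have Am: "A k \<in> sets M" for k unfolding A_def by measurable
    have eq: "{\<omega> \<in> space M. \<exists>k\<ge>n. \<bar>\<Sum>i\<in>{1..k}. X i \<omega>\<bar> > \<epsilon> * real k} = (\<Union>i. A (i + n))"
    proof (intro set_eqI iffI)
      fix \<omega> assume "\<omega> \<in> {\<omega> \<in> space M. \<exists>k\<ge>n. \<bar>\<Sum>i\<in>{1..k}. X i \<omega>\<bar> > \<epsilon> * real k}"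
      then obtain k where "k \<ge> n" "\<omega> \<in> A k" by (auto simp: A_def)
      hence "\<omega> \<in> A ((k - n) + n)" by simp
      thus "\<omega> \<in> (\<Union>i. A (i + n))" by blast
    next
      fix \<omega> assume "\<omega> \<in> (\<Union>i. A (i + n))"
      then obtain i where "\<omega> \<in> A (i + n)" by blast
      thus "\<omega> \<in> {\<omega> \<in> space M. \<exists>k\<ge>n. \<bar>\<Sum>i\<in>{1..k}. X i \<omega>\<bar> > \<epsilon> * real k}"
        using le_add2[of n i] unfolding A_def by blast
    qed
    define Q where "Q = exp (- c0 * ln (real n) powr \<gamma>)"
    have Q0: "Q \<ge> 0" by (simp add: Q_def)
    have n1: "real n \<ge> 1" using n N1 by simp
    have "emeasure M (\<Union>i. A (i + n)) \<le> (\<Sum>i. emeasure M (A (i + n)))"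
      by (rule emeasure_subadditive_countably) (auto simp: Am)
    also have "\<dots> \<le> (\<Sum>i. ennreal (Q * inverse (real (Suc i) ^ 2)))"
    proof (intro suminf_le allI summableI)
      fix i
      have "P.prob (A (i + n)) \<le> exp (- c0 * ln (real (i + n)) powr \<gamma>) * inverse (real (i + n) ^ 2)"
        using bound_k[of "i + n"] n unfolding A_def by simp
      also have "\<dots> \<le> Q * inverse (real (Suc i) ^ 2)"
      proof (intro mult_mono)
        have "ln (real n) powr \<gamma> \<le> ln (real (i + n)) powr \<gamma>"
          using n1 assms(6) by (intro powr_mono2) auto
        thus "exp (- c0 * ln (real (i + n)) powr \<gamma>) \<le> Q" unfolding Q_def using c0 by simp
        show "inverse (real (i + n) ^ 2) \<le> inverse (real (Suc i) ^ 2)"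
          using n1 by (intro le_imp_inverse_le power_mono) auto
      qed (auto simp: Q0)
      finally show "emeasure M (A (i + n)) \<le> ennreal (Q * inverse (real (Suc i) ^ 2))"
        by (simp add: P.emeasure_eq_measure ennreal_leI)
    qed
    also have "(\<Sum>i. ennreal (Q * inverse (real (Suc i) ^ 2))) = ennreal (Q * Z)"
    proof -
      have "(\<Sum>i. ennreal (Q * inverse (real (Suc i) ^ 2))) = ennreal (\<Sum>i. Q * inverse (real (Suc i) ^ 2))"
        using Q0 by (intro suminf_ennreal2 summable_mult Zs) auto
      also have "(\<Sum>i. Q * inverse (real (Suc i) ^ 2)) = Q * Z" unfolding Z_def by (rule suminf_mult[OF Zs])
      finally show ?thesis .
    qed
    finally have "emeasure M (\<Union>i. A (i + n)) \<le> ennreal (Q * Z)" .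
    hence "P.prob (\<Union>i. A (i + n)) \<le> Q * Z"
      using Q0 Z0 by (simp add: P.emeasure_eq_measure)
    thus ?thesis unfolding eq Q_def .
  qed
  define D where "D = Z + 3 + 2 * ln (real N) powr \<gamma>"
  have D3: "D \<ge> 3" unfolding D_def using Z0 by simp
  define c where "c = min c0 (1 / D)"
  have cpos: "c > 0" using c0 D3 by (simp add: c_def)
  have cD: "D \<le> 1 / c"
  proof -
    have "c * D \<le> 1" using D3 by (simp add: c_def min_def field_simps)
    thus ?thesis using cpos by (simp add: field_simps)
  qed
  show "\<exists>c>0. \<forall>n::nat. measure M {\<omega> \<in> space M. \<exists>k\<ge>n. \<bar>\<Sum>i\<in>{1..k}. X i \<omega>\<bar> > \<epsilon> * real k}
             \<le> (1 / c) * exp (- c * (ln (real n)) powr \<gamma>)"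
  proof (intro exI[of _ c] conjI allI cpos)
    fix n :: nat
    show "measure M {\<omega> \<in> space M. \<exists>k\<ge>n. \<bar>\<Sum>i\<in>{1..k}. X i \<omega>\<bar> > \<epsilon> * real k}
             \<le> (1 / c) * exp (- c * (ln (real n)) powr \<gamma>)"
    proof (cases "n \<ge> N")
      case True
      have L0: "ln (real n) powr \<gamma> \<ge> 0" by simp
      have "exp (- c0 * ln (real n) powr \<gamma>) \<le> exp (- c * ln (real n) powr \<gamma>)"
        using L0 by (simp add: c_def mult_right_mono)
      moreover have "Z \<le> 1 / c"
      proof -
        have "0 \<le> ln (real N) powr \<gamma>" by simp
        thus ?thesis using cD unfolding D_def by linarith
      qed
      ultimately have "exp (- c0 * ln (real n) powr \<gamma>) * Z \<le> exp (- c * ln (real n) powr \<gamma>) * (1 / c)"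
        using Z0 by (intro mult_mono) auto
      thus ?thesis using big[OF True] by (simp add: mult_ac)
    next
      case False
      have Ln: "ln (real n) powr \<gamma> \<le> ln (real N) powr \<gamma>"
      proof (cases "n = 0")
        case False
        thus ?thesis using \<open>\<not> n \<ge> N\<close> assms(6) by (intro powr_mono2) auto
      qed simp
      have "c * ln (real n) powr \<gamma> \<le> (1 / D) * ln (real N) powr \<gamma>"
        using Ln cpos by (intro mult_mono) (auto simp: c_def)
      also have "\<dots> \<le> 1 / 2"
      proof -
        have "0 \<le> ln (real N) powr \<gamma>" by simp
        hence "2 * ln (real N) powr \<gamma> \<le> D" using Z0 unfolding D_def by linarith
        thus ?thesis using D3 by (simp add: field_simps)
      qed
      finally have "- c * ln (real n) powr \<gamma> \<ge> -1/2" by simp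
      hence "exp (- c * ln (real n) powr \<gamma>) \<ge> 1 / 2"
        using exp_ge_add_one_self[of "-1/2"] exp_le_cancel_iff[of "-1/2" "- c * ln (real n) powr \<gamma>"] by linarith
      moreover have "1 / c \<ge> 3" using cD D3 by simp
      ultimately have "(1 / c) * exp (- c * (ln (real n)) powr \<gamma>) \<ge> 3 * (1 / 2)"
        using cpos by (intro mult_mono) auto
      moreover have "measure M {\<omega> \<in> space M. \<exists>k\<ge>n. \<bar>\<Sum>i\<in>{1..k}. X i \<omega>\<bar> > \<epsilon> * real k} \<le> 1"
        by (rule P.prob_le_1)
      ultimately show ?thesis by linarith
    qed
  qed
qed
end
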